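(* Let $M$ and $k$ be fixed nonnegative integers, and let $\Phi$ be an open formula of $\mathcal{L}_{\mathrm{Ab}}$ with $n$ variables such that every term occurring in $\Phi$ has depth at most $k$. Then for any $a_1,\dots,a_n\in[-2^M,2^M]$, $$\mathbf{R}\models\Phi(a_1,\dots,a_n)\quad\text{iff}\quad [0,1]_{\text{\L}}[\tfrac12]\models\tau'(\Phi)(r_{M,k}(a_1),\dots,r_{M,k}(a_n)).$$ Equivalently, for any $b_1,\dots,b_n\in\left[\tfrac12-\tfrac1{2^{k+1}},\tfrac12+\tfrac1{2^{k+1}}\right]$, $$[0,1]_{\text{\L}}[\tfrac12]\models\tau'(\Phi)(b_1,\dots,b_n)\quad\text{iff}\quad \mathbf{R}\models\Phi(r_{M,k}^{-1}(b_1),\dots,r_{M,k}^{-1}(b_n)).$$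
   Context: $\mathcal{L}_{\mathrm{Ab}}=\langle +,-,0,\wedge,\vee\rangle$; $\mathbf{R}=\langle\mathbb{R},+,-,\wedge,\vee,0\rangle$ is the ordered additive group of reals with $\wedge=\min$, $\vee=\max$. Open formulas are finite Boolean combinations (negation, conjunction, disjunction) of atoms $\phi=\psi$. $[0,1]_{\text{\L}}[\tfrac12]$ has domain $[0,1]$ with $\neg a=1-a$, $a\otimes b=\max(0,a+b-1)$, $a\oplus b=\min(1,a+b)$, $a\to b=\min(1,1-a+b)$, $\wedge=\min$, $\vee=\max$, and constants $0,1,\tfrac12$. Depth of terms: variables and constants have depth $0$, $\mathrm{depth}(-\phi)=\mathrm{depth}(\phi)+1$, $\mathrm{depth}(\phi\circ\psi)=\max(\mathrm{depth}(\phi),\mathrm{depth}(\psi))+1$ for $\circ\in\{+,\wedge,\vee\}$. The term translation $\tau$: $\tau(x)=x$ for variables; $\tau(0)=\tfrac12$; $\tau(-\phi)=\neg\tau(\phi)$; $\tau(\phi+\psi)=(\tau(\phi)\oplus\tau(\psi))\otimes(\tfrac12\oplus(\tau(\phi)\otimes\tau(\psi)))$; $\tau(\phi\vee\psi)=\tau(\phi)\vee\tau(\psi)$; $\tau(\phi\wedge\psi)=\tau(\phi)\wedge\tau(\psi)$. For an open formula $\Phi$, $\tau'(\Phi)$ is obtained by replacing each atom $\phi=\psi$ by $\tau(\phi)=\tau(\psi)$, leaving the Boolean structure unchanged. $r_{M,k}(a)=\frac{a}{2^{M+k+1}}+\frac12$, a bijection from $[-2^M,2^M]$ onto $[\tfrac12-\tfrac1{2^{k+1}},\tfrac12+\tfrac1{2^{k+1}}]$.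 *)

theory Defs
  imports Complex_Main
begin

datatype ab_term = AVar nat | AZero | ANeg ab_term | AAdd ab_term ab_term
  | AMeet ab_term ab_term | AJoin ab_term ab_term

datatype 'a ofml = Atom 'a 'a | FNot "'a ofml" | FAnd "'a ofml" "'a ofml"
  | FOr "'a ofml" "'a ofml"

fun ab_depth :: "ab_term \<Rightarrow> nat" where
  "ab_depth (AVar i) = 0"
| "ab_depth AZero = 0"
| "ab_depth (ANeg t) = ab_depth t + 1"
| "ab_depth (AAdd s t) = max (ab_depth s) (ab_depth t) + 1"
| "ab_depth (AMeet s t) = max (ab_depth s) (ab_depth t) + 1"
| "ab_depth (AJoin s t) = max (ab_depth s) (ab_depth t) + 1"

fun ab_vars :: "ab_term \<Rightarrow> nat set" where
  "ab_vars (AVar i) = {i}"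
| "ab_vars AZero = {}"
| "ab_vars (ANeg t) = ab_vars t"
| "ab_vars (AAdd s t) = ab_vars s \<union> ab_vars t"
| "ab_vars (AMeet s t) = ab_vars s \<union> ab_vars t"
| "ab_vars (AJoin s t) = ab_vars s \<union> ab_vars t"

fun ab_eval :: "(nat \<Rightarrow> real) \<Rightarrow> ab_term \<Rightarrow> real" where
  "ab_eval v (AVar i) = v i"
| "ab_eval v AZero = 0"
| "ab_eval v (ANeg t) = - ab_eval v t"
| "ab_eval v (AAdd s t) = ab_eval v s + ab_eval v t"
| "ab_eval v (AMeet s t) = min (ab_eval v s) (ab_eval v t)"
| "ab_eval v (AJoin s t) = max (ab_eval v s) (ab_eval v t)"

fun fml_terms :: "'a ofml \<Rightarrow> 'a set" where
  "fml_terms (Atom s t) = {s, t}"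
| "fml_terms (FNot p) = fml_terms p"
| "fml_terms (FAnd p q) = fml_terms p \<union> fml_terms q"
| "fml_terms (FOr p q) = fml_terms p \<union> fml_terms q"

fun fml_sat :: "('a \<Rightarrow> 'b) \<Rightarrow> 'a ofml \<Rightarrow> bool" where
  "fml_sat ev (Atom s t) = (ev s = ev t)"
| "fml_sat ev (FNot p) = (\<not> fml_sat ev p)"
| "fml_sat ev (FAnd p q) = (fml_sat ev p \<and> fml_sat ev q)"
| "fml_sat ev (FOr p q) = (fml_sat ev p \<or> fml_sat ev q)"

fun fml_map :: "('a \<Rightarrow> 'b) \<Rightarrow> 'a ofml \<Rightarrow> 'b ofml" where
  "fml_map f (Atom s t) = Atom (f s) (f t)"
| "fml_map f (FNot p) = FNot (fml_map f p)"
| "fml_map f (FAnd p q) = FAnd (fml_map f p) (fml_map f q)"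
| "fml_map f (FOr p q) = FOr (fml_map f p) (fml_map f q)"

datatype mv_term = MVar nat | MZero | MOne | MHalf | MNeg mv_term
  | MOtimes mv_term mv_term | MOplus mv_term mv_term | MImp mv_term mv_term
  | MMin mv_term mv_term | MMax mv_term mv_term

fun mv_eval :: "(nat \<Rightarrow> real) \<Rightarrow> mv_term \<Rightarrow> real" where
  "mv_eval v (MVar i) = v i"
| "mv_eval v MZero = 0"
| "mv_eval v MOne = 1"
| "mv_eval v MHalf = 1/2"
| "mv_eval v (MNeg t) = 1 - mv_eval v t"
| "mv_eval v (MOtimes s t) = max 0 (mv_eval v s + mv_eval v t - 1)"
| "mv_eval v (MOplus s t) = min 1 (mv_eval v s + mv_eval v t)"
| "mv_eval v (MImp s t) = min 1 (1 - mv_eval v s + mv_eval v t)"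
| "mv_eval v (MMin s t) = min (mv_eval v s) (mv_eval v t)"
| "mv_eval v (MMax s t) = max (mv_eval v s) (mv_eval v t)"

fun tau :: "ab_term \<Rightarrow> mv_term" where
  "tau (AVar i) = MVar i"
| "tau AZero = MHalf"
| "tau (ANeg t) = MNeg (tau t)"
| "tau (AAdd s t) = MOtimes (MOplus (tau s) (tau t)) (MOplus MHalf (MOtimes (tau s) (tau t)))"
| "tau (AJoin s t) = MMax (tau s) (tau t)"
| "tau (AMeet s t) = MMin (tau s) (tau t)"

definition tau' :: "ab_term ofml \<Rightarrow> mv_term ofml" where
  "tau' \<Phi> = fml_map tau \<Phi>"

definition r_Mk :: "nat \<Rightarrow> nat \<Rightarrow> real \<Rightarrow> real" where
  "r_Mk M k a = a / 2 ^ (M + k + 1) + 1/2"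

end

theory Submission
  imports Defs
begin

lemma add_case:
  fixes p q :: real
  assumes "\<bar>p\<bar> \<le> 1/4" "\<bar>q\<bar> \<le> 1/4"
  shows "max 0 (min 1 ((p + 1/2) + (q + 1/2)) + min 1 (1/2 + max 0 ((p + 1/2) + (q + 1/2) - 1)) - 1) = (p + q) + 1/2"
  using assms unfolding max_def min_def abs_if by (auto split: if_splits)

lemma key:
  "(\<forall>i\<in>ab_vars t. \<bar>a i\<bar> \<le> 2^M \<and> v i = r_Mk M k (a i)) \<Longrightarrow>
   \<bar>ab_eval a t\<bar> \<le> 2^(M + ab_depth t) \<and>
   (ab_depth t \<le> k \<longrightarrow> mv_eval v (tau t) = r_Mk M k (ab_eval a t))"
proof (induction t)
  case (AVar x)
  then show ?case by simp
next
  case AZero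
  then show ?case by (simp add: r_Mk_def)
next
  case (ANeg t)
  then show ?case by (auto simp: r_Mk_def)
next
  case (AAdd s t)
  let ?c = "(2::real) ^ (M + k + 1)"
  have hs: "\<bar>ab_eval a s\<bar> \<le> 2^(M + ab_depth s)" and ht: "\<bar>ab_eval a t\<bar> \<le> 2^(M + ab_depth t)"
    and es: "ab_depth s \<le> k \<longrightarrow> mv_eval v (tau s) = r_Mk M k (ab_eval a s)"
    and et: "ab_depth t \<le> k \<longrightarrow> mv_eval v (tau t) = r_Mk M k (ab_eval a t)"
    using AAdd by auto
  have b1: "\<bar>ab_eval a (AAdd s t)\<bar> \<le> 2^(M + ab_depth (AAdd s t))"
  proof -
    have p1: "(2::real)^(M + ab_depth s) \<le> 2^(M + max (ab_depth s) (ab_depth t))"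
      and p2: "(2::real)^(M + ab_depth t) \<le> 2^(M + max (ab_depth s) (ab_depth t))"
      by (rule power_increasing; simp)+
    have e: "(2::real)^(M + ab_depth (AAdd s t)) = 2 * 2^(M + max (ab_depth s) (ab_depth t))" by simp
    show ?thesis using p1 p2 e hs ht abs_triangle_ineq[of "ab_eval a s" "ab_eval a t"] by (simp only: ab_eval.simps)
  qed
  moreover have "mv_eval v (tau (AAdd s t)) = r_Mk M k (ab_eval a (AAdd s t))"
    if d: "ab_depth (AAdd s t) \<le> k"
  proof -
    have ds: "M + ab_depth s + 2 \<le> M + k + 1" and dt: "M + ab_depth t + 2 \<le> M + k + 1" using d by auto
    have c1: "(2::real)^(M + ab_depth s + 2) \<le> ?c" and c2: "(2::real)^(M + ab_depth t + 2) \<le> ?c"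
      using power_increasing[OF ds, of "2::real"] power_increasing[OF dt, of "2::real"] by simp_all
    have f1: "(2::real)^(M + ab_depth s + 2) = 4 * 2^(M + ab_depth s)"
      and f2: "(2::real)^(M + ab_depth t + 2) = 4 * 2^(M + ab_depth t)" by (simp_all add: power_add)
    have "4 * \<bar>ab_eval a s\<bar> \<le> ?c" "4 * \<bar>ab_eval a t\<bar> \<le> ?c"
      using hs ht c1 c2 unfolding f1 f2 by linarith+
    hence p: "\<bar>ab_eval a s / ?c\<bar> \<le> 1/4" and q: "\<bar>ab_eval a t / ?c\<bar> \<le> 1/4"
      by (simp_all add: field_simps)
    have "mv_eval v (tau (AAdd s t)) = max 0 (min 1 ((ab_eval a s / ?c + 1/2) + (ab_eval a t / ?c + 1/2))
        + min 1 (1/2 + max 0 ((ab_eval a s / ?c + 1/2) + (ab_eval a t / ?c + 1/2) - 1)) - 1)"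
      using es et d by (simp add: r_Mk_def)
    also have "\<dots> = (ab_eval a s / ?c + ab_eval a t / ?c) + 1/2" by (rule add_case[OF p q])
    finally show ?thesis by (simp add: r_Mk_def add_divide_distrib)
  qed
  ultimately show ?case by blast
next
  case (AMeet s t)
  have hs: "\<bar>ab_eval a s\<bar> \<le> 2^(M + ab_depth s)" and ht: "\<bar>ab_eval a t\<bar> \<le> 2^(M + ab_depth t)"
    and es: "ab_depth s \<le> k \<longrightarrow> mv_eval v (tau s) = r_Mk M k (ab_eval a s)"
    and et: "ab_depth t \<le> k \<longrightarrow> mv_eval v (tau t) = r_Mk M k (ab_eval a t)"
    using AMeet by auto
  have "(2::real)^(M + ab_depth s) \<le> 2^(M + max (ab_depth s) (ab_depth t) + 1)"
      "(2::real)^(M + ab_depth t) \<le> 2^(M + max (ab_depth s) (ab_depth t) + 1)"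
      by (rule power_increasing; simp)+
  then show ?case using hs ht es et
    by (auto simp: r_Mk_def min_def divide_right_mono divide_le_cancel)
next
  case (AJoin s t)
  have hs: "\<bar>ab_eval a s\<bar> \<le> 2^(M + ab_depth s)" and ht: "\<bar>ab_eval a t\<bar> \<le> 2^(M + ab_depth t)"
    and es: "ab_depth s \<le> k \<longrightarrow> mv_eval v (tau s) = r_Mk M k (ab_eval a s)"
    and et: "ab_depth t \<le> k \<longrightarrow> mv_eval v (tau t) = r_Mk M k (ab_eval a t)"
    using AJoin by auto
  have "(2::real)^(M + ab_depth s) \<le> 2^(M + max (ab_depth s) (ab_depth t) + 1)"
      "(2::real)^(M + ab_depth t) \<le> 2^(M + max (ab_depth s) (ab_depth t) + 1)"
      by (rule power_increasing; simp)+
  then show ?case using hs ht es et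
    by (auto simp: r_Mk_def max_def divide_right_mono divide_le_cancel)
qed

lemma fml_transfer:
  assumes "inj g" "\<forall>t\<in>fml_terms \<Phi>. ev2 (f t) = g (ev1 t)"
  shows "fml_sat ev1 \<Phi> = fml_sat ev2 (fml_map f \<Phi>)"
  using assms(2) by (induction \<Phi>) (auto simp: inj_eq[OF assms(1)])

lemma r_inj: "inj (r_Mk M k)"
  by (rule injI) (simp add: r_Mk_def)

theorem mainTheorem5:
  fixes M k n :: nat and \<Phi> :: "ab_term ofml"
  assumes vars: "\<forall>t \<in> fml_terms \<Phi>. ab_vars t \<subseteq> {..<n}"
    and depth: "\<forall>t \<in> fml_terms \<Phi>. ab_depth t \<le> k"
  shows "(\<forall>a :: nat \<Rightarrow> real. (\<forall>i<n. a i \<in> {- (2 ^ M) .. 2 ^ M}) \<longrightarrow>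
            (fml_sat (ab_eval a) \<Phi> \<longleftrightarrow>
             fml_sat (mv_eval (\<lambda>i. r_Mk M k (a i))) (tau' \<Phi>)))
       \<and> (\<forall>b :: nat \<Rightarrow> real.
            (\<forall>i<n. b i \<in> {1/2 - 1 / 2 ^ (k + 1) .. 1/2 + 1 / 2 ^ (k + 1)}) \<longrightarrow>
            (fml_sat (mv_eval b) (tau' \<Phi>) \<longleftrightarrow>
             fml_sat (ab_eval (\<lambda>i. inv_into {- (2 ^ M) .. 2 ^ M} (r_Mk M k) (b i))) \<Phi>))"
proof -
  have gen: "fml_sat (ab_eval a) \<Phi> \<longleftrightarrow> fml_sat (mv_eval v) (tau' \<Phi>)"
    if h: "\<forall>i<n. \<bar>a i\<bar> \<le> 2^M \<and> v i = r_Mk M k (a i)" for a v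
    unfolding tau'_def
  proof (rule fml_transfer[OF r_inj])
    show "\<forall>t\<in>fml_terms \<Phi>. mv_eval v (tau t) = r_Mk M k (ab_eval a t)"
    proof
      fix t assume t: "t \<in> fml_terms \<Phi>"
      have "\<forall>i\<in>ab_vars t. \<bar>a i\<bar> \<le> 2^M \<and> v i = r_Mk M k (a i)" using vars t h by blast
      from key[OF this] show "mv_eval v (tau t) = r_Mk M k (ab_eval a t)" using depth t by blast
    qed
  qed
  have part2: "\<exists>x\<in>{- (2 ^ M) .. 2 ^ M}. r_Mk M k x = y"
    if "y \<in> {1/2 - 1 / 2 ^ (k + 1) .. 1/2 + 1 / 2 ^ (k + 1)}" for y :: real
  proof
    let ?x = "(y - 1/2) * 2 ^ (M + k + 1)"
    show "r_Mk M k ?x = y" by (simp add: r_Mk_def)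
    have "\<bar>y - 1/2\<bar> \<le> 1 / 2^(k+1)" using that by auto
    hence "\<bar>?x\<bar> \<le> 1 / 2^(k+1) * 2 ^ (M + k + 1)"
      unfolding abs_mult
      by (subst (2) abs_of_pos, simp, rule mult_right_mono, simp_all)
    also have "\<dots> = 2^M" by (simp add: power_add field_simps)
    finally show "?x \<in> {- (2 ^ M) .. 2 ^ M}" by auto
  qed
  show ?thesis
  proof (intro conjI allI impI)
    fix a :: "nat \<Rightarrow> real" assume "\<forall>i<n. a i \<in> {- (2 ^ M) .. 2 ^ M}"
    then show "fml_sat (ab_eval a) \<Phi> \<longleftrightarrow> fml_sat (mv_eval (\<lambda>i. r_Mk M k (a i))) (tau' \<Phi>)"
      by (intro gen) auto
  next
    fix b :: "nat \<Rightarrow> real"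
    assume b: "\<forall>i<n. b i \<in> {1/2 - 1 / 2 ^ (k + 1) .. 1/2 + 1 / 2 ^ (k + 1)}"
    have "\<forall>i<n. \<bar>inv_into {- (2 ^ M) .. 2 ^ M} (r_Mk M k) (b i)\<bar> \<le> 2^M \<and>
       b i = r_Mk M k (inv_into {- (2 ^ M) .. 2 ^ M} (r_Mk M k) (b i))"
    proof (intro allI impI)
      fix i assume "i < n"
      then obtain x where x: "x \<in> {- (2 ^ M) .. 2 ^ M}" "r_Mk M k x = b i" using part2 b by blast
      hence bi: "b i \<in> r_Mk M k ` {- (2 ^ M) .. 2 ^ M}" by (metis image_eqI)
      have "inv_into {- (2 ^ M) .. 2 ^ M} (r_Mk M k) (b i) \<in> {- (2 ^ M) .. 2 ^ M}"
        by (rule inv_into_into[OF bi])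
      then show "\<bar>inv_into {- (2 ^ M) .. 2 ^ M} (r_Mk M k) (b i)\<bar> \<le> 2^M \<and>
       b i = r_Mk M k (inv_into {- (2 ^ M) .. 2 ^ M} (r_Mk M k) (b i))"
        using f_inv_into_f[OF bi] by auto
    qed
    from gen[OF this] show "fml_sat (mv_eval b) (tau' \<Phi>) \<longleftrightarrow>
       fml_sat (ab_eval (\<lambda>i. inv_into {- (2 ^ M) .. 2 ^ M} (r_Mk M k) (b i))) \<Phi>" by simp
  qed
qed

end
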